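(* Let $\phi=(Q,\Sigma,\delta^\phi,q_0,Q\setminus\{q_{err}\})$ be a finite-state property and $R\subseteq\Sigma^*\times\Gamma$ a loss model. Define the NFA $\psi^*=(Q,\Gamma,\delta^{\psi^*},q_0,Q\setminus\{q_{err}\})$ by $$\delta^{\psi^*}(q,\gamma)=\delta^\phi(q,R^{-1}(\gamma))=\{\delta^\phi(q,s)\mid s\in\Sigma^*,\ sR\gamma\}\quad(q\in Q,\ \gamma\in\Gamma).$$ Then $\psi^*$ satisfies the superposed monitor condition and $L(\psi^* )=L_{opt}(\phi,R)$, where $L_{opt}(\phi,R)=\{y\in\Gamma^*\mid \mathcal{F}_R^{-1}(y)\cap L(\phi)\neq\emptyset\}$.
   Context: A finite-state property is a minimum-state DFA $\phi=(Q,\Sigma,\delta^\phi,q_0,Q\setminus\{q_{err}\})$ with designated trap error state $q_{err}$; $L(\phi)=\{x\mid\delta^\phi(q_0,x)\neq q_{err}\}$. $\delta^\phi$ is lifted to sets of states and sets of strings. A loss model is $R\subseteq\Sigma^*\times\Gamma$ with $\Gamma$ finite, and $R^{-1}(\gamma)=\{s\mid sR\gamma\}$. A filter under $R$ is determined by pairs $(s_1,\gamma_1),\dots,(s_m,\gamma_m)$ with $s_iR\gamma_i$ and a string $r\in\Sigma^*$; it maps each prefix $x$ of $s_1\cdots s_m r$ to $\gamma_1\cdots\gamma_j$ with $j$ maximal such that $s_1\cdots s_j$ is a prefix of $x$. $x\in\Sigma^*$ is a completion of $y\in\Gamma^*$ if some filter $f$ under $R$ has $f(x)=y$ and $f(x')\neq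 y$ for every proper prefix $x'$ of $x$; $\mathcal{F}_R^{-1}(y)$ is the set of completions. For an NFA $\psi=(Q,\Gamma,\delta^\psi,q_0,Q\setminus\{q_{err}\})$, $L(\psi)=\{y\mid\delta^\psi(\{q_0\},y)\cap(Q\setminus\{q_{err}\})\neq\emptyset\}$; it satisfies the superposed monitor condition if $\delta^\phi(q_0,x)\in\delta^\psi(\{q_0\},y)$ for all $y\in\Gamma^*$ and all $x\in\mathcal{F}_R^{-1}(y)$. *)

theory Defs
  imports Main "HOL-Library.Sublist"
begin

definition dfa_run :: "('q \<Rightarrow> 'a \<Rightarrow> 'q) \<Rightarrow> 'q \<Rightarrow> 'a list \<Rightarrow> 'q" where
  "dfa_run \<delta> q xs = foldl \<delta> q xs"

definition is_dfa :: "'q set \<Rightarrow> 'a set \<Rightarrow> ('q \<Rightarrow> 'a \<Rightarrow> 'q) \<Rightarrow> 'q \<Rightarrow> 'q set \<Rightarrow> bool" where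
  "is_dfa Q \<Sigma> \<delta> q0 F \<longleftrightarrow> finite Q \<and> finite \<Sigma> \<and> q0 \<in> Q \<and> F \<subseteq> Q \<and>
     (\<forall>q\<in>Q. \<forall>a\<in>\<Sigma>. \<delta> q a \<in> Q)"

definition dfa_lang :: "'a set \<Rightarrow> ('q \<Rightarrow> 'a \<Rightarrow> 'q) \<Rightarrow> 'q \<Rightarrow> 'q set \<Rightarrow> 'a list set" where
  "dfa_lang \<Sigma> \<delta> q0 F = {x \<in> lists \<Sigma>. dfa_run \<delta> q0 x \<in> F}"

text \<open>Minimum-state DFA: no DFA over the same alphabet accepting the same language has
  fewer states. Competitor DFAs are taken with states in nat (every finite DFA is
  isomorphic to one of those).\<close>
definition min_state_dfa :: "'q set \<Rightarrow> 'a set \<Rightarrow> ('q \<Rightarrow> 'a \<Rightarrow> 'q) \<Rightarrow> 'q \<Rightarrow> 'q set \<Rightarrow> bool" where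
  "min_state_dfa Q \<Sigma> \<delta> q0 F \<longleftrightarrow> is_dfa Q \<Sigma> \<delta> q0 F \<and>
     (\<forall>(Q'::nat set) \<delta>' q0' F'. is_dfa Q' \<Sigma> \<delta>' q0' F' \<and>
        dfa_lang \<Sigma> \<delta>' q0' F' = dfa_lang \<Sigma> \<delta> q0 F \<longrightarrow> card Q \<le> card Q')"

definition finite_state_property ::
  "'q set \<Rightarrow> 'a set \<Rightarrow> ('q \<Rightarrow> 'a \<Rightarrow> 'q) \<Rightarrow> 'q \<Rightarrow> 'q \<Rightarrow> bool" where
  "finite_state_property Q \<Sigma> \<delta> q0 qerr \<longleftrightarrow> qerr \<in> Q \<and>
     (\<forall>a\<in>\<Sigma>. \<delta> qerr a = qerr) \<and> min_state_dfa Q \<Sigma> \<delta> q0 (Q - {qerr})"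

definition prop_lang :: "'a set \<Rightarrow> ('q \<Rightarrow> 'a \<Rightarrow> 'q) \<Rightarrow> 'q \<Rightarrow> 'q \<Rightarrow> 'a list set" where
  "prop_lang \<Sigma> \<delta> q0 qerr = {x \<in> lists \<Sigma>. dfa_run \<delta> q0 x \<noteq> qerr}"

definition loss_model :: "'a set \<Rightarrow> 'g set \<Rightarrow> ('a list \<times> 'g) set \<Rightarrow> bool" where
  "loss_model \<Sigma> \<Gamma> R \<longleftrightarrow> finite \<Gamma> \<and> R \<subseteq> lists \<Sigma> \<times> \<Gamma>"

text \<open>The filter determined by pairs ps = [(s1,g1),...,(sm,gm)] (and a string r, which only
  determines the domain): maps x to g1...gj with j maximal such that s1...sj is a prefix of x.\<close>
definition filter_fun :: "('a list \<times> 'g) list \<Rightarrow> 'a list \<Rightarrow> 'g list" where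
  "filter_fun ps x = map snd (take (GREATEST j. j \<le> length ps \<and>
       prefix (concat (map fst (take j ps))) x) ps)"

definition completions :: "'a set \<Rightarrow> ('a list \<times> 'g) set \<Rightarrow> 'g list \<Rightarrow> 'a list set" where
  "completions \<Sigma> R y = {x. \<exists>ps r. set ps \<subseteq> R \<and> r \<in> lists \<Sigma> \<and>
       prefix x (concat (map fst ps) @ r) \<and> filter_fun ps x = y \<and>
       (\<forall>x'. strict_prefix x' x \<longrightarrow> filter_fun ps x' \<noteq> y)}"

definition L_opt :: "'a set \<Rightarrow> 'g set \<Rightarrow> ('q \<Rightarrow> 'a \<Rightarrow> 'q) \<Rightarrow> 'q \<Rightarrow> 'q \<Rightarrow>
    ('a list \<times> 'g) set \<Rightarrow> 'g list set" where
  "L_opt \<Sigma> \<Gamma> \<delta> q0 qerr R =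
     {y \<in> lists \<Gamma>. completions \<Sigma> R y \<inter> prop_lang \<Sigma> \<delta> q0 qerr \<noteq> {}}"

definition nfa_run :: "('q \<Rightarrow> 'g \<Rightarrow> 'q set) \<Rightarrow> 'q set \<Rightarrow> 'g list \<Rightarrow> 'q set" where
  "nfa_run \<delta> S ys = foldl (\<lambda>T g. \<Union>q\<in>T. \<delta> q g) S ys"

definition nfa_lang :: "'g set \<Rightarrow> 'q set \<Rightarrow> ('q \<Rightarrow> 'g \<Rightarrow> 'q set) \<Rightarrow> 'q \<Rightarrow> 'q \<Rightarrow> 'g list set" where
  "nfa_lang \<Gamma> Q \<delta> q0 qerr = {y \<in> lists \<Gamma>. nfa_run \<delta> {q0} y \<inter> (Q - {qerr}) \<noteq> {}}"

definition superposed_monitor ::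
  "'a set \<Rightarrow> 'g set \<Rightarrow> ('q \<Rightarrow> 'a \<Rightarrow> 'q) \<Rightarrow> 'q \<Rightarrow> ('a list \<times> 'g) set \<Rightarrow>
   ('q \<Rightarrow> 'g \<Rightarrow> 'q set) \<Rightarrow> bool" where
  "superposed_monitor \<Sigma> \<Gamma> \<delta> q0 R \<delta>\<psi> \<longleftrightarrow>
     (\<forall>y\<in>lists \<Gamma>. \<forall>x\<in>completions \<Sigma> R y. dfa_run \<delta> q0 x \<in> nfa_run \<delta>\<psi> {q0} y)"

definition psi_star :: "('q \<Rightarrow> 'a \<Rightarrow> 'q) \<Rightarrow> ('a list \<times> 'g) set \<Rightarrow> 'q \<Rightarrow> 'g \<Rightarrow> 'q set" where
  "psi_star \<delta> R q g = {dfa_run \<delta> q s | s. (s, g) \<in> R}"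

end

theory Submission
  imports Defs
begin

lemma ff_props:
  fixes ps :: "('a list \<times> 'g) list" and x :: "'a list"
  defines "J \<equiv> GREATEST j. j \<le> length ps \<and> prefix (concat (map fst (take j ps))) x"
  shows "J \<le> length ps \<and> prefix (concat (map fst (take J ps))) x"
    and "\<And>j. j \<le> length ps \<Longrightarrow> prefix (concat (map fst (take j ps))) x \<Longrightarrow> j \<le> J"
    and "filter_fun ps x = map snd (take J ps)"
proof -
  let ?P = "\<lambda>j. j \<le> length ps \<and> prefix (concat (map fst (take j ps))) x"
  have b: "\<And>y. ?P y \<Longrightarrow> y \<le> length ps" by blast
  have p0: "?P 0" by simp
  show "J \<le> length ps \<and> prefix (concat (map fst (take J ps))) x"
    unfolding J_def by (rule GreatestI_nat[of ?P 0 "length ps"]) auto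
  show "\<And>j. j \<le> length ps \<Longrightarrow> prefix (concat (map fst (take j ps))) x \<Longrightarrow> j \<le> J"
    unfolding J_def by (rule Greatest_le_nat[of ?P _ "length ps"]) auto
  show "filter_fun ps x = map snd (take J ps)" unfolding filter_fun_def J_def ..
qed

lemma dfa_run_append: "dfa_run \<delta> q (xs @ ys) = dfa_run \<delta> (dfa_run \<delta> q xs) ys"
  by (simp add: dfa_run_def)

lemma nfa_run_snoc: "nfa_run d S (ys @ [g]) = (\<Union>q\<in>nfa_run d S ys. d q g)"
  by (simp add: nfa_run_def)

lemma nfa_run_char:
  "q' \<in> nfa_run (psi_star \<delta> R) {q} y \<longleftrightarrow>
    (\<exists>ss. list_all2 (\<lambda>s g. (s,g) \<in> R) ss y \<and> q' = dfa_run \<delta> q (concat ss))"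
proof (induction y arbitrary: q' rule: rev_induct)
  case Nil
  then show ?case by (simp add: nfa_run_def dfa_run_def)
next
  case (snoc g ys)
  show ?case
  proof
    assume "q' \<in> nfa_run (psi_star \<delta> R) {q} (ys @ [g])"
    then obtain p where p: "p \<in> nfa_run (psi_star \<delta> R) {q} ys" and "q' \<in> psi_star \<delta> R p g"
      by (auto simp: nfa_run_snoc)
    then obtain s where s: "(s,g) \<in> R" "q' = dfa_run \<delta> p s" by (auto simp: psi_star_def)
    from p snoc obtain ss where "list_all2 (\<lambda>s g. (s,g) \<in> R) ss ys" "p = dfa_run \<delta> q (concat ss)"
      by blast
    with s show "\<exists>ss. list_all2 (\<lambda>s g. (s,g) \<in> R) ss (ys @ [g]) \<and> q' = dfa_run \<delta> q (concat ss)"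
      by (intro exI[of _ "ss @ [s]"]) (auto simp: list_all2_appendI dfa_run_append)
  next
    assume "\<exists>ss. list_all2 (\<lambda>s g. (s,g) \<in> R) ss (ys @ [g]) \<and> q' = dfa_run \<delta> q (concat ss)"
    then obtain ss where a: "list_all2 (\<lambda>s g. (s,g) \<in> R) ss (ys @ [g])"
      and q': "q' = dfa_run \<delta> q (concat ss)" by blast
    from a obtain ss1 s where ss: "ss = ss1 @ [s]" "list_all2 (\<lambda>s g. (s,g) \<in> R) ss1 ys" "(s,g) \<in> R"
      by (auto simp: list_all2_append2 list_all2_Cons2)
    have "dfa_run \<delta> q (concat ss1) \<in> nfa_run (psi_star \<delta> R) {q} ys" using snoc ss by blast
    then show "q' \<in> nfa_run (psi_star \<delta> R) {q} (ys @ [g])"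
      using ss q' by (auto simp: nfa_run_snoc psi_star_def dfa_run_append)
  qed
qed

lemma la2_take: "set ps \<subseteq> R \<Longrightarrow> list_all2 (\<lambda>s g. (s,g) \<in> R) (map fst (take n ps)) (map snd (take n ps))"
  by (induction ps arbitrary: n) (auto simp: take_Cons split: nat.splits)

lemma completion_run:
  assumes "x \<in> completions \<Sigma> R y"
  shows "dfa_run \<delta> q0 x \<in> nfa_run (psi_star \<delta> R) {q0} y"
proof -
  from assms obtain ps r where ps: "set ps \<subseteq> R" and fx: "filter_fun ps x = y"
    and mn: "\<forall>x'. strict_prefix x' x \<longrightarrow> filter_fun ps x' \<noteq> y"
    unfolding completions_def by blast
  define c where "c = (\<lambda>j. concat (map fst (take j ps)))"
  define J where "J = (GREATEST j. j \<le> length ps \<and> prefix (c j) x)"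
  have J1: "J \<le> length ps" "prefix (c J) x" and J2: "\<And>j. j \<le> length ps \<Longrightarrow> prefix (c j) x \<Longrightarrow> j \<le> J"
    and y: "y = map snd (take J ps)"
    subgoal using ff_props(1)[where ps=ps and x=x] unfolding c_def J_def by blast
    subgoal using ff_props(1)[where ps=ps and x=x] unfolding c_def J_def by blast
    subgoal using ff_props(2)[where ps=ps and x=x] unfolding c_def J_def by blast
    subgoal using ff_props(3)[where ps=ps and x=x] fx unfolding c_def J_def by simp
    done
  define J' where "J' = (GREATEST j. j \<le> length ps \<and> prefix (c j) (c J))"
  have K1: "J' \<le> length ps" "prefix (c J') (c J)" and K2: "\<And>j. j \<le> length ps \<Longrightarrow> prefix (c j) (c J) \<Longrightarrow> j \<le> J'"
    and fc: "filter_fun ps (c J) = map snd (take J' ps)"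
    subgoal using ff_props(1)[where ps=ps and x="c J"] unfolding c_def J'_def by blast
    subgoal using ff_props(1)[where ps=ps and x="c J"] unfolding c_def J'_def by blast
    subgoal using ff_props(2)[where ps=ps and x="c J"] unfolding c_def J'_def by blast
    subgoal using ff_props(3)[where ps=ps and x="c J"] unfolding c_def J'_def by simp
    done
  have "J \<le> J'" using K2[OF J1(1)] by simp
  moreover have "J' \<le> J" using J2[OF K1(1)] K1(2) J1(2) prefix_order.trans by blast
  ultimately have "filter_fun ps (c J) = y" using fc y by simp
  hence xc: "x = c J" using mn J1(2) by (metis prefix_order.le_less)
  have "list_all2 (\<lambda>s g. (s,g) \<in> R) (map fst (take J ps)) y"
    using ps unfolding y by (rule la2_take)
  hence "dfa_run \<delta> q0 (c J) \<in> nfa_run (psi_star \<delta> R) {q0} y"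
    unfolding c_def by (subst nfa_run_char) blast
  thus ?thesis using xc by simp
qed

lemma dfa_run_in:
  assumes "is_dfa Q \<Sigma> \<delta> q0 F" "q \<in> Q" "x \<in> lists \<Sigma>"
  shows "dfa_run \<delta> q x \<in> Q"
  using assms(2,3)
proof (induction x arbitrary: q)
  case Nil then show ?case by (simp add: dfa_run_def)
next
  case (Cons a x)
  then have "\<delta> q a \<in> Q" using assms(1) by (auto simp: is_dfa_def)
  then show ?case using Cons by (simp add: dfa_run_def)
qed

theorem theorem3:
  fixes Q :: "'q set" and \<Sigma> :: "'a set" and \<Gamma> :: "'g set"
    and \<delta> :: "'q \<Rightarrow> 'a \<Rightarrow> 'q" and q0 qerr :: 'q and R :: "('a list \<times> 'g) set"
  assumes "finite_state_property Q \<Sigma> \<delta> q0 qerr"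
    and "loss_model \<Sigma> \<Gamma> R"
  shows "superposed_monitor \<Sigma> \<Gamma> \<delta> q0 R (psi_star \<delta> R)
       \<and> nfa_lang \<Gamma> Q (psi_star \<delta> R) q0 qerr = L_opt \<Sigma> \<Gamma> \<delta> q0 qerr R"
proof
  show "superposed_monitor \<Sigma> \<Gamma> \<delta> q0 R (psi_star \<delta> R)"
    unfolding superposed_monitor_def by (blast intro: completion_run)
  have dfa: "is_dfa Q \<Sigma> \<delta> q0 (Q - {qerr})" using assms(1)
    by (simp add: finite_state_property_def min_state_dfa_def)
  have RS: "R \<subseteq> lists \<Sigma> \<times> \<Gamma>" using assms(2) by (simp add: loss_model_def)
  show "nfa_lang \<Gamma> Q (psi_star \<delta> R) q0 qerr = L_opt \<Sigma> \<Gamma> \<delta> q0 qerr R"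
  proof (rule set_eqI, rule iffI)
    fix y assume "y \<in> L_opt \<Sigma> \<Gamma> \<delta> q0 qerr R"
    then obtain x where y: "y \<in> lists \<Gamma>" and x: "x \<in> completions \<Sigma> R y" "x \<in> lists \<Sigma>"
      "dfa_run \<delta> q0 x \<noteq> qerr"
      by (auto simp: L_opt_def prop_lang_def)
    have "dfa_run \<delta> q0 x \<in> Q" using dfa_run_in[OF dfa _ x(2)] dfa by (simp add: is_dfa_def)
    then show "y \<in> nfa_lang \<Gamma> Q (psi_star \<delta> R) q0 qerr"
      using completion_run[OF x(1), of \<delta> q0] x(3) y by (auto simp: nfa_lang_def)
  next
    fix y assume "y \<in> nfa_lang \<Gamma> Q (psi_star \<delta> R) q0 qerr"
    then obtain q where y: "y \<in> lists \<Gamma>" and q: "q \<in> nfa_run (psi_star \<delta> R) {q0} y" "q \<noteq> qerr"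
      by (auto simp: nfa_lang_def)
    then obtain ss where ss: "list_all2 (\<lambda>s g. (s,g) \<in> R) ss y" and qx: "q = dfa_run \<delta> q0 (concat ss)"
      using nfa_run_char[of q \<delta> R q0 y] by blast
    define ps where "ps = zip ss y"
    have len: "length ss = length y" using ss list_all2_lengthD by blast
    have psR: "set ps \<subseteq> R" using ss unfolding ps_def
      by (induction ss y rule: list_all2_induct) auto
    have fps: "map fst ps = ss" "map snd ps = y" "length ps = length y" using len by (auto simp: ps_def)
    have ssL: "concat ss \<in> lists \<Sigma>" using psR RS fps(1) by fastforce
    have ff: "\<And>x'. prefix x' (concat ss) \<Longrightarrow> filter_fun ps x' = y \<Longrightarrow> x' = concat ss"
    proof -
      fix x' assume p: "prefix x' (concat ss)" and f: "filter_fun ps x' = y"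
      define J where "J = (GREATEST j. j \<le> length ps \<and> prefix (concat (map fst (take j ps))) x')"
      have J1: "J \<le> length ps" "prefix (concat (map fst (take J ps))) x'"
        and fj: "filter_fun ps x' = map snd (take J ps)"
        subgoal using ff_props(1)[where ps=ps and x=x'] unfolding J_def by blast
        subgoal using ff_props(1)[where ps=ps and x=x'] unfolding J_def by blast
        subgoal using ff_props(3)[where ps=ps and x=x'] unfolding J_def by simp
        done
      have "length (map snd (take J ps)) = length y" using f fj by simp
      hence "J = length ps" using J1(1) fps(3) by simp
      hence "prefix (concat ss) x'" using J1(2) fps(1) by simp
      thus "x' = concat ss" using p by (simp add: prefix_order.antisym)
    qed
    have fy: "filter_fun ps (concat ss) = y"
    proof -
      define J where "J = (GREATEST j. j \<le> length ps \<and> prefix (concat (map fst (take j ps))) (concat ss))"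
      have J1: "J \<le> length ps" and J2: "length ps \<le> J"
        and fj: "filter_fun ps (concat ss) = map snd (take J ps)"
        subgoal using ff_props(1)[where ps=ps and x="concat ss"] unfolding J_def by blast
        subgoal using ff_props(2)[where ps=ps and x="concat ss"] fps(1) unfolding J_def by simp
        subgoal using ff_props(3)[where ps=ps and x="concat ss"] unfolding J_def by simp
        done
      then show ?thesis using fps(2) by simp
    qed
    have "concat ss \<in> completions \<Sigma> R y"
      unfolding completions_def
      apply (rule CollectI, rule exI[of _ ps], rule exI[of _ "[]"])
      using psR fps(1) fy ff by (auto simp: strict_prefix_def)
    moreover have "concat ss \<in> prop_lang \<Sigma> \<delta> q0 qerr" using ssL q qx by (simp add: prop_lang_def)
    ultimately show "y \<in> L_opt \<Sigma> \<Gamma> \<delta> q0 qerr R" using y by (auto simp: L_opt_def)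
  qed
qed

end
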